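(* Let $V$ be a finite-dimensional vector space over an algebraically closed field $k$, let $G = \mathrm{GL}(V)$, let $U \subseteq V$ be a subspace and fix a complement $\widetilde{U}$ to $U$ in $V$. Let $K = \mathrm{GL}(U) \le G$, embedded via the decomposition $V = U \oplus \widetilde{U}$ (acting trivially on $\widetilde{U}$). Then $\mathcal{S}_K = \{W \subseteq V \mid (W \subseteq V) \in \mathcal{F}_K\}$.
   Context: A flag in $V$ is a chain $0\neq W_1 \subsetneq \dots \subsetneq W_m \subsetneq V$, written $(W_1\subseteq\dots\subseteq W_m\subseteq V)$. For a cocharacter $\lambda$ of $G$, $P_\lambda = \{g \in G \mid \lim_{a\to 0}\lambda(a)g\lambda(a)^{-1} \text{ exists}\}$. $\mathcal{F}_K$ is the set of flags whose stabilizer in $G$ equals $P_\lambda$ for some cocharacter $\lambda$ of $K$, and $\mathcal{S}_K$ is the set of subspaces of $V$ appearing in flags from $\mathcal{F}_K$. *)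

theory Defs
  imports "HOL-Analysis.Analysis" "HOL-Computational_Algebra.Polynomial"
begin

text \<open>V is modelled as k^n, i.e. the type 'a^'n with 'a a field and 'n a finite type;
 G = GL(V) is the set of invertible matrices 'a^'n^'n acting via *v.\<close>

text \<open>A regular function on G_m = k^* (Laurent polynomial), viewed on nonzero arguments.\<close>
definition laurent_fun :: "('a::field \<Rightarrow> 'a) \<Rightarrow> bool" where
  "laurent_fun f \<longleftrightarrow> (\<exists>(p::'a poly) (m::nat). \<forall>a. a \<noteq> 0 \<longrightarrow> f a = poly p a / a ^ m)"

text \<open>A cocharacter of G: a morphism of algebraic groups G_m \<rightarrow> GL(V)
  (matrix entries regular functions on G_m, group homomorphism on k^*).\<close>
definition cocharacter :: "('a::field \<Rightarrow> 'a^'n^'n) \<Rightarrow> bool" where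
  "cocharacter lam \<longleftrightarrow>
     (\<forall>a. a \<noteq> 0 \<longrightarrow> invertible (lam a)) \<and>
     (\<forall>a b. a \<noteq> 0 \<longrightarrow> b \<noteq> 0 \<longrightarrow> lam (a * b) = lam a ** lam b) \<and>
     (\<forall>i j. laurent_fun (\<lambda>a. lam a $ i $ j))"

definition cocharacter_of :: "('a::field^'n^'n) set \<Rightarrow> ('a \<Rightarrow> 'a^'n^'n) \<Rightarrow> bool" where
  "cocharacter_of K lam \<longleftrightarrow> cocharacter lam \<and> (\<forall>a. a \<noteq> 0 \<longrightarrow> lam a \<in> K)"

text \<open>P_lambda: those g in G such that a \<mapsto> lam(a) g lam(a)^{-1} extends to a morphism
  A^1 \<rightarrow> G, i.e. its entries are polynomials in a and its value at 0 is invertible.\<close>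
definition parabolic :: "('a::field \<Rightarrow> 'a^'n^'n) \<Rightarrow> ('a^'n^'n) set" where
  "parabolic lam = {g. invertible g \<and>
     (\<exists>p :: 'n \<Rightarrow> 'n \<Rightarrow> 'a poly.
        (\<forall>a. a \<noteq> 0 \<longrightarrow> (\<forall>i j. (lam a ** g ** matrix_inv (lam a)) $ i $ j = poly (p i j) a)) \<and>
        invertible ((\<chi> i j. poly (p i j) 0) :: 'a^'n^'n))}"

definition is_flag :: "('a::field^'n) set list \<Rightarrow> bool" where
  "is_flag Ws \<longleftrightarrow> (\<forall>W \<in> set Ws. vec.subspace W) \<and> sorted_wrt (\<subset>) Ws \<and>
     (Ws \<noteq> [] \<longrightarrow> hd Ws \<noteq> {0} \<and> last Ws \<noteq> UNIV)"

definition flag_stabilizer :: "('a::field^'n) set list \<Rightarrow> ('a^'n^'n) set" where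
  "flag_stabilizer Ws = {g. invertible g \<and> (\<forall>W \<in> set Ws. (\<lambda>v. g *v v) ` W = W)}"

definition flags_K :: "('a::field^'n^'n) set \<Rightarrow> ('a^'n) set list set" where
  "flags_K K = {Ws. is_flag Ws \<and> (\<exists>lam. cocharacter_of K lam \<and> flag_stabilizer Ws = parabolic lam)}"

definition subspaces_K :: "('a::field^'n^'n) set \<Rightarrow> ('a^'n) set set" where
  "subspaces_K K = {W. \<exists>Ws \<in> flags_K K. W \<in> set Ws}"

definition GL_sub :: "('a::field^'n) set \<Rightarrow> ('a^'n) set \<Rightarrow> ('a^'n^'n) set" where
  "GL_sub U Ut = {g. invertible g \<and> (\<lambda>v. g *v v) ` U = U \<and> (\<forall>w \<in> Ut. g *v w = w)}"

end

theory Submission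
  imports Defs
begin
abbreviation lin :: "('a::field^'n \<Rightarrow> 'a^'n) \<Rightarrow> bool" where
  "lin f \<equiv> Vector_Spaces.linear (*s) (*s) f"

definition pr :: "('a::field^'n) set \<Rightarrow> ('a^'n) set \<Rightarrow> 'a^'n \<Rightarrow> 'a^'n" where
  "pr A B v = (SOME a. a \<in> A \<and> v - a \<in> B)"

locale compl =
  fixes A B :: "('a::field^'n) set"
  assumes sA: "vec.subspace A" and sB: "vec.subspace B" and AB: "A \<inter> B = {0}"
    and sp: "\<forall>v. \<exists>a\<in>A. \<exists>b\<in>B. v = a + b"
begin

lemma pr_ex: "pr A B v \<in> A \<and> v - pr A B v \<in> B"
proof -
  obtain a b where "a \<in> A" "b \<in> B" "v = a + b" using sp by blast
  then have "\<exists>a. a \<in> A \<and> v - a \<in> B" by (intro exI[of _ a]) simp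
  then show ?thesis unfolding pr_def by (rule someI_ex)
qed

lemma pr_in: "pr A B v \<in> A" and pr_diff: "v - pr A B v \<in> B"
  using pr_ex by auto

lemma pr_unique: assumes "a \<in> A" "v - a \<in> B" shows "pr A B v = a"
proof -
  have "pr A B v - a \<in> A" using pr_in assms sA vec.subspace_diff by blast
  moreover have "pr A B v - a = (v - a) - (v - pr A B v)" by simp
  then have "pr A B v - a \<in> B" using pr_diff assms sB vec.subspace_diff by metis
  ultimately have "pr A B v - a \<in> A \<inter> B" by blast
  then show ?thesis using AB by auto
qed

lemma pr_A: "a \<in> A \<Longrightarrow> pr A B a = a"
  by (rule pr_unique) (auto simp: sB vec.subspace_0)

lemma pr_B: "b \<in> B \<Longrightarrow> pr A B b = 0"
  by (rule pr_unique) (auto simp: sA vec.subspace_0)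

lemma pr_lin: "lin (pr A B)"
proof -
  have add: "pr A B (x + y) = pr A B x + pr A B y" for x y
    apply (rule pr_unique)
    using pr_in pr_diff sA sB vec.subspace_add
     apply blast
    using pr_diff[of x] pr_diff[of y] sB vec.subspace_add
    by (metis add_diff_add)
  have sc: "pr A B (c *s x) = c *s pr A B x" for c x
    apply (rule pr_unique)
    using pr_in sA vec.subspace_scale apply blast
    using pr_diff[of x] sB vec.subspace_scale
    by (metis vector_ssub_ldistrib)
  show ?thesis
    unfolding Vector_Spaces.linear_iff using add sc vec.vector_space_axioms by blast
qed

end

lemma complement_exists:
  fixes A B :: "('a::field^'n) set"
  assumes "vec.subspace A" "vec.subspace B" "A \<subseteq> B"
  shows "\<exists>C. vec.subspace C \<and> C \<subseteq> B \<and> A \<inter> C = {0} \<and> (\<forall>v\<in>B. \<exists>a\<in>A. \<exists>c\<in>C. v = a + c)"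
proof -
  obtain BA where BA: "BA \<subseteq> A" "vec.independent BA" "A \<subseteq> vec.span BA"
    using vec.maximal_independent_subset by blast
  obtain B' where B': "BA \<subseteq> B'" "B' \<subseteq> B" "vec.independent B'" "B \<subseteq> vec.span B'"
    using vec.maximal_independent_subset_extend[of BA B] BA assms(3) by blast
  define C where "C = vec.span (B' - BA)"
  have spA: "vec.span BA \<subseteq> A" using BA(1) assms(1) vec.span_minimal by blast
  have "C \<subseteq> B" unfolding C_def using B'(2) assms(2) vec.span_minimal by blast
  moreover have "A \<inter> C = {0}"
  proof -
    define f where "f = vec.construct B' (\<lambda>b. if b \<in> BA then b else 0)"
    have lf: "lin f" unfolding f_def using vec.linear_construct B'(3) by blast
    have "x = 0" if x: "x \<in> A" "x \<in> C" for x
    proof -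
      have "f x = id x"
        apply (rule vec.linear_eq_on[OF lf vec.linear_id, of x BA])
        using x BA B' by (auto simp: f_def vec.construct_basis)
      moreover have "f x = (\<lambda>_. 0) x"
        apply (rule vec.linear_eq_on[OF lf vec.linear_zero, of x "B' - BA"])
        using x B' by (auto simp: f_def C_def vec.construct_basis)
      ultimately show ?thesis by simp
    qed
    moreover have "0 \<in> A \<inter> C" using assms(1) vec.subspace_0 C_def vec.span_zero by blast
    ultimately show ?thesis by blast
  qed
  moreover have "\<forall>v\<in>B. \<exists>a\<in>A. \<exists>c\<in>C. v = a + c"
  proof
    fix v assume "v \<in> B"
    then have "v \<in> vec.span (BA \<union> (B' - BA))" using B' by (metis Un_Diff_cancel sup.absorb2 subsetD)
    then show "\<exists>a\<in>A. \<exists>c\<in>C. v = a + c" unfolding vec.span_Un C_def using spA by blast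
  qed
  ultimately show ?thesis unfolding C_def by blast
qed

lemma infinite_field:
  assumes alg_closed: "\<forall>p :: 'a::field poly. degree p > 0 \<longrightarrow> (\<exists>x. poly p x = 0)"
  shows "infinite (UNIV :: 'a set)"
proof
  assume fin: "finite (UNIV :: 'a set)"
  define p where "p = (\<Prod>a\<in>UNIV. [:-a, 1:]) + (1 :: 'a poly)"
  have "degree (\<Prod>a\<in>(UNIV::'a set). [:-a, 1:]) = card (UNIV :: 'a set)"
    by (simp add: degree_prod_eq_sum_degree)
  moreover have "card (UNIV :: 'a set) > 0" using fin by (simp add: card_gt_0_iff)
  ultimately have "degree p > 0" unfolding p_def
    by (metis degree_add_eq_left degree_1)
  then obtain x where "poly p x = 0" using alg_closed by blast
  moreover have "poly (\<Prod>a\<in>(UNIV::'a set). [:-a, 1:]) x = 0"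
    by (simp add: poly_prod fin)
  ultimately show False unfolding p_def by simp
qed

lemma matrix_inv_eq:
  fixes A B :: "'a::field^'n^'n"
  assumes "A ** B = mat 1"
  shows "matrix_inv A = B"
proof -
  have BA: "B ** A = mat 1" using assms matrix_left_right_inverse by blast
  have "\<exists>X. A ** X = mat 1 \<and> X ** A = mat 1" using assms BA by blast
  then have X: "A ** matrix_inv A = mat 1 \<and> matrix_inv A ** A = mat 1"
    unfolding matrix_inv_def by (rule someI_ex)
  have "matrix_inv A = matrix_inv A ** (A ** B)" using assms by simp
  also have "\<dots> = B" using X by (simp add: matrix_mul_assoc)
  finally show ?thesis .
qed

lemma matrix_inv_right:
  fixes A :: "'a::field^'n^'n"
  assumes "invertible A"
  shows "A ** matrix_inv A = mat 1"
proof -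
  obtain B where "A ** B = mat 1" using assms invertible_def by blast
  then show ?thesis using matrix_inv_eq by metis
qed

lemma matrix_comp_apply:
  assumes "lin f" "lin g"
  shows "matrix f ** matrix g = matrix (\<lambda>x. f (g x))"
  using matrix_compose_gen[OF assms(2) assms(1)] by (simp add: o_def)

lemma lin_add: "lin f \<Longrightarrow> f (x + y) = f x + f y" by (rule vec.linear_add)
lemma lin_scale: "lin f \<Longrightarrow> f (c *s x) = c *s f x" by (rule vec.linear_scale)
lemma lin_diff: "lin f \<Longrightarrow> f (x - y) = f x - f y" by (rule vec.linear_diff)
lemma lin_0: "lin f \<Longrightarrow> f 0 = 0" by (rule vec.linear_0)

lemma linI:
  assumes "\<And>x y. f (x + y) = f x + f y" "\<And>c x. f (c *s x) = c *s f x"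
  shows "lin f"
  unfolding Vector_Spaces.linear_iff using assms vec.vector_space_axioms by blast

locale setting =
  fixes U Ut :: "('a::field^'n) set"
  assumes sU: "vec.subspace U" and sUt: "vec.subspace Ut" and UUt: "U \<inter> Ut = {0}"
    and spU: "\<forall>v. \<exists>u\<in>U. \<exists>w\<in>Ut. v = u + w"
begin

interpretation cU: compl U Ut using sU sUt UUt spU by unfold_locales

definition pu where "pu = pr U Ut"
definition q where "q v = v - pu v"

lemma pu_lin: "lin pu" unfolding pu_def by (rule cU.pr_lin)
lemma q_lin: "lin q"
  by (rule linI) (auto simp: q_def lin_add[OF pu_lin] lin_scale[OF pu_lin] vector_ssub_ldistrib)
lemma pu_in: "pu v \<in> U" unfolding pu_def by (rule cU.pr_in)
lemma q_in: "q v \<in> Ut" unfolding q_def pu_def by (rule cU.pr_diff)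
lemma pu_U: "u \<in> U \<Longrightarrow> pu u = u" unfolding pu_def by (rule cU.pr_A)
lemma pu_Ut: "w \<in> Ut \<Longrightarrow> pu w = 0" unfolding pu_def by (rule cU.pr_B)
lemma q_U: "u \<in> U \<Longrightarrow> q u = 0" by (simp add: q_def pu_U)
lemma q_Ut: "w \<in> Ut \<Longrightarrow> q w = w" by (simp add: q_def pu_Ut)
lemma pu_q: "pu v + q v = v" by (simp add: q_def)

lemma H_stab:
  assumes F: "F \<in> flags_K (GL_sub U Ut)" and W: "W \<in> set F"
    and lS: "lin S" and lS': "lin S'"
    and SUt: "\<And>x. x \<in> Ut \<Longrightarrow> S x \<in> Ut \<and> S' x \<in> Ut \<and> S' (S x) = x \<and> S (S' x) = x"
  shows "(\<lambda>v. pu v + S (q v)) ` W = W"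
proof -
  define T where "T v = pu v + S (q v)" for v
  define T' where "T' v = pu v + S' (q v)" for v
  have lT: "lin T" unfolding T_def
    by (rule linI) (simp_all add: lin_add[OF pu_lin] lin_scale[OF pu_lin] lin_add[OF q_lin]
       lin_scale[OF q_lin] lin_add[OF lS] lin_scale[OF lS] vector_add_ldistrib)
  have lT': "lin T'" unfolding T'_def
    by (rule linI) (simp_all add: lin_add[OF pu_lin] lin_scale[OF pu_lin] lin_add[OF q_lin]
       lin_scale[OF q_lin] lin_add[OF lS'] lin_scale[OF lS'] vector_add_ldistrib)
  have puT: "pu (pu v + y) = pu v" "q (pu v + y) = y" if "y \<in> Ut" for v y
    using that by (simp_all add: lin_add[OF pu_lin] lin_add[OF q_lin] pu_U pu_in pu_Ut q_U q_Ut)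
  have TT': "T (T' v) = v" for v
    unfolding T_def T'_def using puT SUt q_in pu_q by simp
  have T'T: "T' (T v) = v" for v
    unfolding T_def T'_def using puT SUt q_in pu_q by simp
  define h where "h = matrix T"
  have hv: "h *v v = T v" for v unfolding h_def using matrix_works[OF lT] .
  have h_inv: "invertible h"
  proof -
    have "h ** matrix T' = matrix (\<lambda>x. T (T' x))" unfolding h_def by (rule matrix_comp_apply[OF lT lT'])
    also have "\<dots> = mat 1" using TT' matrix_id_mat_1 by (simp add: id_def)
    finally show ?thesis using invertible_right_inverse by blast
  qed
  obtain lam where lam: "cocharacter_of (GL_sub U Ut) lam" "flag_stabilizer F = parabolic lam"
    using F unfolding flags_K_def by blast
  have comm: "lam a ** h ** matrix_inv (lam a) = h" if a: "a \<noteq> 0" for a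
  proof -
    have K: "invertible (lam a)" "(\<lambda>v. lam a *v v) ` U = U" "\<forall>w\<in>Ut. lam a *v w = w"
      using lam(1) a unfolding cocharacter_of_def GL_sub_def by auto
    have LU: "lam a *v u \<in> U" if "u \<in> U" for u using K(2) that by blast
    have "lam a *v (h *v v) = h *v (lam a *v v)" for v
    proof -
      have "lam a *v v = lam a *v pu v + q v"
        using K(3) q_in pu_q by (metis matrix_vector_right_distrib)
      then have "pu (lam a *v v) = lam a *v pu v" "q (lam a *v v) = q v"
        using lin_add[OF pu_lin] lin_add[OF q_lin] pu_U q_U LU pu_in pu_Ut q_Ut q_in
        by (metis add.right_neutral, metis add_0)
      then show ?thesis using hv unfolding T_def
        by (simp add: matrix_vector_right_distrib K(3) SUt q_in)
    qed
    then have "lam a ** h = h ** lam a" by (simp add: matrix_eq matrix_vector_mul_assoc)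
    then have "lam a ** h ** matrix_inv (lam a) = h ** (lam a ** matrix_inv (lam a))"
      by (simp add: matrix_mul_assoc)
    then show ?thesis using matrix_inv_right[OF K(1)] by simp
  qed
  have "h \<in> parabolic lam"
    unfolding parabolic_def
  proof (intro CollectI conjI exI[of _ "\<lambda>i j. [:h $ i $ j:]"])
    show "invertible h" by (rule h_inv)
    show "\<forall>a. a \<noteq> 0 \<longrightarrow> (\<forall>i j. (lam a ** h ** matrix_inv (lam a)) $ i $ j = poly [:h $ i $ j:] a)"
      using comm by simp
    have "(\<chi> i j. poly [:h $ i $ j:] 0) = h" by (simp add: vec_eq_iff)
    then show "invertible ((\<chi> i j. poly [:h $ i $ j:] 0) :: 'a^'n^'n)" using h_inv by simp
  qed
  then have "h \<in> flag_stabilizer F" using lam(2) by simp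
  then have "(\<lambda>v. h *v v) ` W = W" using W unfolding flag_stabilizer_def by blast
  then show ?thesis using hv unfolding T_def by simp
qed

end

context setting begin

lemma key_dichotomy:
  assumes inf: "infinite (UNIV :: 'a set)"
    and F: "F \<in> flags_K (GL_sub U Ut)" and W: "W \<in> set F" and sW: "vec.subspace W"
  shows "W \<subseteq> U \<or> Ut \<subseteq> W"
proof (cases "W \<subseteq> U")
  case True
  then show ?thesis by blast
next
  case False
  then obtain v where v: "v \<in> W" "v \<notin> U" by blast
  define w where "w = q v"
  have w0: "w \<noteq> 0" using v pu_q pu_in unfolding w_def by (metis add.right_neutral)
  obtain c :: 'a where c: "c \<noteq> 0" "c \<noteq> 1"
  proof -
    have "\<not> (UNIV :: 'a set) \<subseteq> {0, 1}" using inf finite_subset by blast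
    then show ?thesis using that by blast
  qed
  have "(\<lambda>v. pu v + (\<lambda>x. c *s x) (q v)) ` W = W"
    apply (rule H_stab[OF F W, of _ "\<lambda>x. (1/c) *s x"])
      apply (rule linI; simp add: vector_add_ldistrib vector_smult_assoc mult.commute)
     apply (rule linI; simp add: vector_add_ldistrib vector_smult_assoc mult.commute)
    using c sUt vec.subspace_scale by (auto simp: vector_smult_assoc)
  then have "pu v + c *s q v \<in> W" using v by blast
  then have "(pu v + c *s q v) - v \<in> W" using v sW vec.subspace_diff by blast
  moreover have "(pu v + c *s q v) - v = (c - 1) *s w"
    unfolding w_def by (subst (2) pu_q[of v, symmetric]) (simp add: vec.scale_left_diff_distrib)
  ultimately have "(1 / (c - 1)) *s ((c - 1) *s w) \<in> W" using sW vec.subspace_scale by metis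
  moreover have "(1 / (c - 1)) * (c - 1) = 1" using c by simp
  ultimately have wW: "w \<in> W" by (metis vector_smult_assoc vector_smult_lid)
  have wUt: "w \<in> Ut" unfolding w_def by (rule q_in)
  have indw: "vec.independent {w}" using w0 by (simp add: vec.independent_insert)
  obtain BUt where B: "{w} \<subseteq> BUt" "BUt \<subseteq> Ut" "vec.independent BUt" "Ut \<subseteq> vec.span BUt"
    using vec.maximal_independent_subset_extend[of "{w}" Ut] indw wUt by blast
  have spB: "vec.span BUt = Ut" using B sUt vec.span_minimal by blast
  have "b \<in> W" if b: "b \<in> BUt" for b
  proof -
    define f where "f x = (if x = w then b else if x = b then w else x)" for x
    define S where "S = vec.construct BUt f"
    have lS: "lin S" unfolding S_def using vec.linear_construct B(3) by blast
    have Sb: "S x = f x" if "x \<in> BUt" for x unfolding S_def using vec.construct_basis B(3) that by blast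
    have fB: "f x \<in> BUt" if "x \<in> BUt" for x using that b B(1) by (auto simp: f_def)
    have SUt: "S x \<in> Ut" if "x \<in> Ut" for x
    proof -
      have "S x \<in> vec.span (f ` BUt)" unfolding S_def using vec.construct_in_span B(3) by blast
      also have "\<dots> \<subseteq> vec.span BUt" using fB by (intro vec.span_mono) blast
      finally show ?thesis using spB by simp
    qed
    have lSS: "lin (\<lambda>x. S (S x))"
      by (rule linI) (simp_all add: lin_add[OF lS] lin_scale[OF lS])
    have SS: "S (S x) = x" if "x \<in> Ut" for x
      apply (rule vec.linear_eq_on[OF lSS vec.linear_id[unfolded id_def], of x BUt])
      using that B(4) apply blast
      using Sb fB by (auto simp: f_def)
    have "(\<lambda>v. pu v + S (q v)) ` W = W"
      by (rule H_stab[OF F W lS lS]) (simp add: SUt SS)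
    then have "pu w + S (q w) \<in> W" using wW by blast
    moreover have "pu w + S (q w) = b" using wUt B(1) pu_Ut q_Ut Sb by (simp add: f_def)
    ultimately show ?thesis by simp
  qed
  then have "Ut \<subseteq> W" using spB sW vec.span_minimal by blast
  then show ?thesis by blast
qed

end

lemma laurent_zero:
  fixes p :: "'a::field poly"
  assumes inf: "infinite (UNIV :: 'a set)"
    and h: "\<forall>a. a \<noteq> 0 \<longrightarrow> poly p a = x + a * y + (1/a) * z"
  shows "z = 0"
proof -
  define r where "r = pCons 0 p - [:z, x, y:]"
  have "poly r a = 0" if "a \<noteq> 0" for a
    using h that by (simp add: r_def field_simps)
  then have sub: "UNIV - {0} \<subseteq> {a. poly r a = 0}" by blast
  have "r = 0"
  proof (rule ccontr)
    assume "r \<noteq> 0"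
    then have "finite {a. poly r a = 0}" by (rule poly_roots_finite)
    then have "finite (UNIV - {0::'a})" using sub finite_subset by blast
    then show False using inf by simp
  qed
  then have "coeff r 0 = 0" by simp
  then show ?thesis by (simp add: r_def)
qed

locale twow = compl W C for W C :: "('a::field^'n) set" +
  fixes s t :: "'a \<Rightarrow> 'a"
  assumes inf: "infinite (UNIV :: 'a set)"
    and st: "\<And>a. a \<noteq> 0 \<Longrightarrow> s a \<noteq> 0 \<and> t a \<noteq> 0 \<and> s a = a * t a"
begin

definition P where "P = pr W C"
definition Q where "Q v = v - P v"

lemma P_lin: "lin P" unfolding P_def by (rule pr_lin)
lemma Q_lin: "lin Q"
  by (rule linI) (auto simp: Q_def lin_add[OF P_lin] lin_scale[OF P_lin] vector_ssub_ldistrib)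
lemma P_in: "P v \<in> W" unfolding P_def by (rule pr_in)
lemma Q_in: "Q v \<in> C" unfolding Q_def P_def by (rule pr_diff)
lemma P_W: "u \<in> W \<Longrightarrow> P u = u" unfolding P_def by (rule pr_A)
lemma P_C: "w \<in> C \<Longrightarrow> P w = 0" unfolding P_def by (rule pr_B)
lemma Q_W: "u \<in> W \<Longrightarrow> Q u = 0" by (simp add: Q_def P_W)
lemma Q_C: "w \<in> C \<Longrightarrow> Q w = w" by (simp add: Q_def P_C)
lemma P_Q: "P v + Q v = v" by (simp add: Q_def)
lemma PP: "P (P v) = P v" and PQ: "P (Q v) = 0" and QP: "Q (P v) = 0" and QQ: "Q (Q v) = Q v"
  using P_W P_C Q_W Q_C P_in Q_in by auto

definition Mf where "Mf x y v = x *s P v + y *s Q v"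

lemma Mf_lin: "lin (Mf x y)"
  unfolding Mf_def
  by (rule linI) (simp_all add: lin_add[OF P_lin] lin_scale[OF P_lin] lin_add[OF Q_lin]
       lin_scale[OF Q_lin] vector_add_ldistrib vector_smult_assoc mult.commute add_ac)

lemma P_Mf: "P (Mf x y v) = x *s P v" and Q_Mf: "Q (Mf x y v) = y *s Q v"
  unfolding Mf_def
  by (simp_all add: lin_add[OF P_lin] lin_scale[OF P_lin] lin_add[OF Q_lin] lin_scale[OF Q_lin] PP PQ QP QQ)

lemma Mf_comp: "Mf x y (Mf x' y' v) = Mf (x * x') (y * y') v"
  unfolding Mf_def[of x y] P_Mf Q_Mf by (simp add: Mf_def vector_smult_assoc)

lemma Mf_expand: "Mf x y (x' *s u + y' *s w) = (x*x') *s P u + (x*y') *s P w + (y*x') *s Q u + (y*y') *s Q w"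
  unfolding Mf_def
  by (simp add: lin_add[OF P_lin] lin_add[OF Q_lin] lin_scale[OF P_lin] lin_scale[OF Q_lin]
      vector_add_ldistrib vector_smult_assoc add_ac)

lemma g_Mf: "g *v Mf x y v = x *s (g *v P v) + y *s (g *v Q v)"
  unfolding Mf_def by (simp add: matrix_vector_right_distrib vec.scale)

lemma Mf_1: "Mf 1 1 v = v" by (simp add: Mf_def P_Q)

definition mu where "mu a = matrix (Mf (s a) (t a))"

lemma mu_mult: "mu a ** mu b = matrix (Mf (s a * s b) (t a * t b))"
  unfolding mu_def by (simp add: matrix_comp_apply[OF Mf_lin Mf_lin] Mf_comp)

lemma mu_inv: assumes "a \<noteq> 0" shows "mu a ** matrix (Mf (1 / s a) (1 / t a)) = mat 1"
proof -
  have "s a * (1 / s a) = 1" "t a * (1 / t a) = 1" using st[OF assms] by auto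
  then show ?thesis unfolding mu_def
    by (simp add: matrix_comp_apply[OF Mf_lin Mf_lin] Mf_comp Mf_1 matrix_id_mat_1[unfolded id_def])
qed

lemma mu_invertible: "a \<noteq> 0 \<Longrightarrow> invertible (mu a)"
  using mu_inv invertible_right_inverse by blast

lemma conj_entry:
  assumes a: "a \<noteq> 0"
  shows "(mu a ** g ** matrix_inv (mu a)) $ i $ j =
     (P (g *v P (axis j 1)) + Q (g *v Q (axis j 1))) $ i + a * (P (g *v Q (axis j 1))) $ i
       + (1/a) * (Q (g *v P (axis j 1))) $ i"
proof -
  have mi: "matrix_inv (mu a) = matrix (Mf (1 / s a) (1 / t a))" using mu_inv[OF a] by (rule matrix_inv_eq)
  have "mu a ** g ** matrix_inv (mu a) = matrix (\<lambda>v. Mf (s a) (t a) (g *v Mf (1 / s a) (1 / t a) v))"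
  proof -
    have "matrix (Mf (s a) (t a)) ** g = matrix (\<lambda>v. Mf (s a) (t a) (g *v v))"
      using matrix_comp_apply[OF Mf_lin matrix_vector_mul_linear_gen, of "s a" "t a" g] by simp
    moreover have "lin (\<lambda>v. Mf (s a) (t a) (g *v v))"
      by (rule linI) (simp_all add: lin_add[OF Mf_lin] lin_scale[OF Mf_lin] matrix_vector_right_distrib vec.scale)
    moreover have "matrix_inv (matrix (Mf (s a) (t a))) = matrix (Mf (1 / s a) (1 / t a))"
      using mi by (simp add: mu_def)
    ultimately show ?thesis unfolding mu_def using matrix_comp_apply[OF _ Mf_lin] by simp
  qed
  moreover have "Mf (s a) (t a) (g *v Mf (1 / s a) (1 / t a) v) =
     P (g *v P v) + Q (g *v Q v) + a *s P (g *v Q v) + (1/a) *s Q (g *v P v)" for v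
  proof -
    have e: "s a * (1 / s a) = 1" "t a * (1 / t a) = 1" "s a * (1 / t a) = a" "t a * (1 / s a) = 1/a"
      using st[OF a] by (auto simp: field_simps)
    show ?thesis unfolding g_Mf Mf_expand e by (simp add: add_ac)
  qed
  ultimately show ?thesis by (simp add: matrix_def field_simps)
qed

end

context twow begin

lemma sW: "vec.subspace W" by (rule sA)

lemma stab_to_par:
  assumes g: "invertible g" and gW: "(\<lambda>v. g *v v) ` W = W"
  shows "g \<in> parabolic mu"
proof -
  have gWin: "g *v w \<in> W" if "w \<in> W" for w using gW that by blast
  have QGP: "Q (g *v P v) = 0" for v using gWin[OF P_in] Q_W by blast
  define al where "al i j = (P (g *v P (axis j 1)) + Q (g *v Q (axis j 1))) $ i" for i j
  define be where "be i j = (P (g *v Q (axis j 1))) $ i" for i j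
  define N where "N v = P (g *v P v) + Q (g *v Q v)" for v
  have lN: "lin N" unfolding N_def
    by (rule linI) (simp_all add: lin_add[OF P_lin] lin_scale[OF P_lin] lin_add[OF Q_lin]
       lin_scale[OF Q_lin] matrix_vector_right_distrib vec.scale vector_add_ldistrib)
  have M0: "(\<chi> i j. poly [:al i j, be i j:] 0) = matrix N"
    by (simp add: matrix_def al_def N_def vec_eq_iff)
  have injg: "inj ((*v) g)" using inj_matrix_vector_mult[OF g] .
  have "invertible (matrix N)"
    unfolding invertible_left_inverse matrix_left_invertible_ker matrix_works[OF lN]
  proof (intro allI impI)
    fix x assume Nx: "N x = 0"
    have a1: "P (g *v P x) \<in> W" by (rule P_in)
    have a2: "Q (g *v Q x) \<in> C" by (rule Q_in)
    have "P (g *v P x) = - Q (g *v Q x)" using Nx unfolding N_def by (simp add: eq_neg_iff_add_eq_0)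
    moreover have "- Q (g *v Q x) \<in> C" using a2 vec.subspace_neg[OF sB] by blast
    ultimately have "P (g *v P x) \<in> W \<inter> C" using a1 by simp
    then have z1: "P (g *v P x) = 0" using AB by blast
    then have z2: "Q (g *v Q x) = 0" using Nx unfolding N_def by simp
    have "g *v P x = 0" using z1 P_W[OF gWin[OF P_in]] by simp
    then have "g *v P x = g *v 0" by simp
    then have px: "P x = 0" using injg by (meson injD)
    have "g *v Q x = P (g *v Q x)" using z2 P_Q[of "g *v Q x"] by simp
    then have "g *v Q x \<in> W" using P_in[of "g *v Q x"] by simp
    then have "g *v Q x \<in> (\<lambda>v. g *v v) ` W" using gW by simp
    then obtain w where "w \<in> W" "g *v w = g *v Q x" by (auto simp: image_iff)
    then have "Q x \<in> W" using injg by (metis injD)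
    then have "Q x \<in> W \<inter> C" using Q_in by blast
    then have "Q x = 0" using AB by blast
    then show "x = 0" using px P_Q[of x] by simp
  qed
  then have inv0: "invertible ((\<chi> i j. poly [:al i j, be i j:] 0) :: 'a^'n^'n)" using M0 by simp
  show ?thesis unfolding parabolic_def
  proof (intro CollectI conjI exI[of _ "\<lambda>i j. [:al i j, be i j:]"] g inv0 allI impI)
    fix a :: 'a and i j assume a: "a \<noteq> 0"
    show "(mu a ** g ** matrix_inv (mu a)) $ i $ j = poly [:al i j, be i j:] a"
      unfolding conj_entry[OF a] al_def be_def QGP by simp
  qed
qed

lemma par_to_stab:
  assumes g: "g \<in> parabolic mu"
  shows "invertible g \<and> (\<lambda>v. g *v v) ` W = W"
proof -
  obtain p where gi: "invertible g"
    and p: "\<forall>a. a \<noteq> 0 \<longrightarrow> (\<forall>i j. (mu a ** g ** matrix_inv (mu a)) $ i $ j = poly (p i j) a)"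
    using g unfolding parabolic_def by blast
  have z: "(Q (g *v P (axis j 1))) $ i = 0" for i j
  proof -
    have "\<forall>a. a \<noteq> 0 \<longrightarrow> poly (p i j) a = (P (g *v P (axis j 1)) + Q (g *v Q (axis j 1))) $ i +
        a * P (g *v Q (axis j 1)) $ i + 1 / a * Q (g *v P (axis j 1)) $ i"
    proof (intro allI impI)
      fix a :: 'a assume a: "a \<noteq> 0"
      have "poly (p i j) a = (mu a ** g ** matrix_inv (mu a)) $ i $ j" using p a by simp
      then show "poly (p i j) a = (P (g *v P (axis j 1)) + Q (g *v Q (axis j 1))) $ i +
        a * P (g *v Q (axis j 1)) $ i + 1 / a * Q (g *v P (axis j 1)) $ i"
        unfolding conj_entry[OF a] .
    qed
    then show ?thesis by (rule laurent_zero[OF inf])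
  qed
  have lR: "lin (\<lambda>v. Q (g *v P v))"
    by (rule linI) (simp_all add: lin_add[OF P_lin] lin_scale[OF P_lin] lin_add[OF Q_lin]
       lin_scale[OF Q_lin] matrix_vector_right_distrib vec.scale)
  have "matrix (\<lambda>v. Q (g *v P v)) = 0" using z by (simp add: matrix_def vec_eq_iff)
  then have QGP: "Q (g *v P v) = 0" for v using matrix_works[OF lR, of v] by simp
  have sub: "(\<lambda>v. g *v v) ` W \<subseteq> W"
  proof
    fix x assume "x \<in> (\<lambda>v. g *v v) ` W"
    then obtain w where w: "w \<in> W" "x = g *v w" by (auto simp: image_iff)
    have "Q x = 0" using QGP[of w] P_W[OF w(1)] w(2) by simp
    then have "x = P x" using P_Q[of x] by simp
    then show "x \<in> W" using P_in[of x] by simp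
  qed
  have injg: "inj ((*v) g)" using inj_matrix_vector_mult[OF gi] .
  have D: "vec.dim ((\<lambda>v. g *v v) ` W) = vec.dim W"
    by (rule vec.dim_image_eq[OF matrix_vector_mul_linear_gen inj_on_subset[OF injg subset_UNIV]])
  have H: "vec.subspace ((\<lambda>v. g *v v) ` W)"
    by (rule vec.linear_subspace_image[OF matrix_vector_mul_linear_gen sW])
  have "(\<lambda>v. g *v v) ` W = W"
    by (rule vec.subspace_dim_equal[OF H sW sub]) (simp add: D)
  then show ?thesis using gi by simp
qed

lemma parabolic_mu: "parabolic mu = flag_stabilizer [W]"
  unfolding flag_stabilizer_def using stab_to_par par_to_stab by auto

lemma mu_cochar_basic:
  assumes "\<And>a b. a \<noteq> 0 \<Longrightarrow> b \<noteq> 0 \<Longrightarrow> s (a * b) = s a * s b \<and> t (a * b) = t a * t b"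
  shows "(\<forall>a. a \<noteq> 0 \<longrightarrow> invertible (mu a)) \<and>
     (\<forall>a b. a \<noteq> 0 \<longrightarrow> b \<noteq> 0 \<longrightarrow> mu (a * b) = mu a ** mu b)"
proof (intro conjI allI impI)
  fix a :: 'a assume "a \<noteq> 0" then show "invertible (mu a)" by (rule mu_invertible)
next
  fix a b :: 'a assume a: "a \<noteq> 0" and b: "b \<noteq> 0"
  show "mu (a * b) = mu a ** mu b" unfolding mu_mult using assms[OF a b] by (simp add: mu_def)
qed

lemma mu_entry: "mu a $ i $ j = s a * P (axis j 1) $ i + t a * Q (axis j 1) $ i"
  by (simp add: mu_def matrix_def Mf_def)

lemma mu_U:
  fixes U :: "('a^'n) set"
  assumes sU: "vec.subspace U" and PU: "\<And>u. u \<in> U \<Longrightarrow> P u \<in> U" and a: "a \<noteq> 0"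
  shows "(\<lambda>v. mu a *v v) ` U = U"
proof -
  have QU: "Q u \<in> U" if "u \<in> U" for u unfolding Q_def by (rule vec.subspace_diff[OF sU that PU[OF that]])
  have MU: "Mf x y u \<in> U" if "u \<in> U" for x y u
    unfolding Mf_def by (intro vec.subspace_add[OF sU] vec.subspace_scale[OF sU] PU QU that)
  have mv: "mu a *v v = Mf (s a) (t a) v" for v unfolding mu_def by (rule matrix_works[OF Mf_lin])
  have "u \<in> (\<lambda>v. mu a *v v) ` U" if "u \<in> U" for u
  proof -
    have "s a * (1 / s a) = 1" "t a * (1 / t a) = 1" using st[OF a] by auto
    then have "Mf (s a) (t a) (Mf (1 / s a) (1 / t a) u) = u" by (simp add: Mf_comp Mf_1)
    moreover have "Mf (1 / s a) (1 / t a) u \<in> U" by (rule MU[OF that])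
    ultimately show ?thesis unfolding mv by (intro image_eqI[where x="Mf (1 / s a) (1 / t a) u"]) simp_all
  qed
  moreover have "(\<lambda>v. mu a *v v) ` U \<subseteq> U" unfolding mv using MU by (intro image_subsetI)
  ultimately show ?thesis by blast
qed

end

lemma sorted_hd: "sorted_wrt (\<subset>) F \<Longrightarrow> W \<in> set F \<Longrightarrow> hd F \<subseteq> W"
  by (cases F) auto

lemma sorted_last: "sorted_wrt (\<subset>) F \<Longrightarrow> W \<in> set F \<Longrightarrow> W \<subseteq> last F"
proof (induction F)
  case Nil then show ?case by simp
next
  case (Cons x xs)
  show ?case
  proof (cases "xs = []")
    case True then show ?thesis using Cons by simp
  next
    case False
    then have "last xs \<in> set xs" by simp
    then show ?thesis using Cons False by auto
  qed
qed

lemma flag_member: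
  assumes "is_flag F" "W \<in> set F"
  shows "vec.subspace W \<and> W \<noteq> {0} \<and> W \<noteq> UNIV"
proof -
  have F: "\<forall>W\<in>set F. vec.subspace W" "sorted_wrt (\<subset>) F" "hd F \<noteq> {0}" "last F \<noteq> UNIV"
    using assms unfolding is_flag_def by auto
  have ne: "F \<noteq> []" using assms(2) by auto
  have sh: "vec.subspace (hd F)" using F(1) ne by simp
  have "hd F \<subseteq> W" by (rule sorted_hd[OF F(2) assms(2)])
  moreover have "0 \<in> hd F" using sh vec.subspace_0 by blast
  ultimately have "W \<noteq> {0}" using F(3) by blast
  moreover have "W \<noteq> UNIV" using sorted_last[OF F(2) assms(2)] F(4) by blast
  ultimately show ?thesis using F(1) assms(2) by blast
qed

theorem lemma4p5:
  fixes U Ut :: "('a::field ^ 'n) set"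
  assumes alg_closed: "\<forall>p :: 'a poly. degree p > 0 \<longrightarrow> (\<exists>x. poly p x = 0)"
    and "vec.subspace U" and "vec.subspace Ut"
    and "U \<inter> Ut = {0}" and "\<forall>v. \<exists>u \<in> U. \<exists>w \<in> Ut. v = u + w"
  shows "subspaces_K (GL_sub U Ut) = {W. [W] \<in> flags_K (GL_sub U Ut)}"
proof -
  interpret setting U Ut using assms(2-5) by unfold_locales
  have inf: "infinite (UNIV :: 'a set)" using infinite_field[OF alg_closed] .
  show ?thesis
  proof
    show "{W. [W] \<in> flags_K (GL_sub U Ut)} \<subseteq> subspaces_K (GL_sub U Ut)"
      unfolding subspaces_K_def by (auto intro!: bexI[where x="[_]"])
  next
    show "subspaces_K (GL_sub U Ut) \<subseteq> {W. [W] \<in> flags_K (GL_sub U Ut)}"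
    proof
      fix W assume "W \<in> subspaces_K (GL_sub U Ut)"
      then obtain F where F: "F \<in> flags_K (GL_sub U Ut)" "W \<in> set F"
        unfolding subspaces_K_def by blast
      have "is_flag F" using F(1) unfolding flags_K_def by blast
      then have Wp: "vec.subspace W" "W \<noteq> {0}" "W \<noteq> UNIV" using flag_member F(2) by blast+
      have isf: "is_flag [W]" using Wp unfolding is_flag_def by simp
      have "\<exists>lam. cocharacter_of (GL_sub U Ut) lam \<and> flag_stabilizer [W] = parabolic lam"
      proof (cases "W \<subseteq> U")
        case True
        obtain C' where C': "vec.subspace C'" "C' \<subseteq> U" "W \<inter> C' = {0}"
            "\<forall>v\<in>U. \<exists>a\<in>W. \<exists>c\<in>C'. v = a + c"
          using complement_exists[OF Wp(1) sU True] by blast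
        define C where "C = vec.span (C' \<union> Ut)"
        have spC: "C = {x + y |x y. x \<in> C' \<and> y \<in> Ut}"
        proof -
          have h: "vec.span C' = C'" "vec.span Ut = Ut"
            using vec.span_eq_iff[of C'] vec.span_eq_iff[of Ut] C'(1) sUt by auto
          show ?thesis by (simp only: C_def vec.span_Un h)
        qed
        have UtC: "Ut \<subseteq> C" unfolding C_def by (meson Un_upper2 vec.span_superset subset_trans)
        have WC: "W \<inter> C = {0}"
        proof -
          have "z = 0" if z: "z \<in> W" "z \<in> C" for z
          proof -
            obtain x y where xy: "x \<in> C'" "y \<in> Ut" "z = x + y" using z(2) spC by blast
            have "y = z - x" using xy by simp
            moreover have "z - x \<in> U" using z(1) True xy(1) C'(2) sU vec.subspace_diff by blast
            ultimately have "y \<in> U \<inter> Ut" using xy by simp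
            then have "y = 0" using UUt by blast
            then have "z \<in> W \<inter> C'" using xy z by simp
            then show ?thesis using C'(3) by blast
          qed
          moreover have "0 \<in> W \<inter> C" using Wp(1) vec.subspace_0 C_def vec.span_zero by blast
          ultimately show ?thesis by blast
        qed
        have spV: "\<forall>v. \<exists>a\<in>W. \<exists>c\<in>C. v = a + c"
        proof
          fix v
          obtain u w where uw: "u \<in> U" "w \<in> Ut" "v = u + w" using assms(5) by blast
          obtain a c where ac: "a \<in> W" "c \<in> C'" "u = a + c" using C'(4) uw(1) by blast
          have "c + w \<in> C" using spC ac(2) uw(2) by blast
          then show "\<exists>a\<in>W. \<exists>c\<in>C. v = a + c" using ac uw by (metis add.assoc)
        qed
        interpret T: twow W C "\<lambda>a. a" "\<lambda>a. 1"
          using Wp(1) WC spV inf vec.subspace_span[of "C' \<union> Ut"] unfolding C_def[symmetric]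
          by unfold_locales simp_all
        show ?thesis
        proof (intro exI conjI)
          show "flag_stabilizer [W] = parabolic T.mu" using T.parabolic_mu by simp
          have mv: "T.mu a *v v = T.Mf a 1 v" for a v unfolding T.mu_def by (rule matrix_works[OF T.Mf_lin])
          show "cocharacter_of (GL_sub U Ut) T.mu"
            unfolding cocharacter_of_def cocharacter_def
          proof (intro conjI)
            show "\<forall>a. a \<noteq> 0 \<longrightarrow> invertible (T.mu a)" "\<forall>a b. a \<noteq> 0 \<longrightarrow> b \<noteq> 0 \<longrightarrow> T.mu (a * b) = T.mu a ** T.mu b"
              using T.mu_cochar_basic by simp_all
            show "\<forall>i j. laurent_fun (\<lambda>a. T.mu a $ i $ j)"
            proof (intro allI)
            fix i j
            show "laurent_fun (\<lambda>a. T.mu a $ i $ j)"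
              unfolding laurent_fun_def T.mu_entry
              by (rule exI[of _ "[:T.Q (axis j 1) $ i, T.P (axis j 1) $ i:]"], rule exI[of _ 0]) (simp add: algebra_simps)
            qed
            show "\<forall>a. a \<noteq> 0 \<longrightarrow> T.mu a \<in> GL_sub U Ut"
            proof (intro allI impI)
            fix a :: 'a assume a: "a \<noteq> 0"
            have PU: "T.P u \<in> U" if "u \<in> U" for u using T.P_in True by blast
            show "T.mu a \<in> GL_sub U Ut" unfolding GL_sub_def
            proof (intro CollectI conjI ballI)
              show "invertible (T.mu a)" using T.mu_invertible[OF a] .
              show "(\<lambda>v. T.mu a *v v) ` U = U" by (rule T.mu_U[OF sU PU a])
              fix w assume "w \<in> Ut"
              then have "w \<in> C" using UtC by blast
              then show "T.mu a *v w = w" unfolding mv T.Mf_def using T.P_C T.Q_C by simp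
            qed
            qed
          qed
        qed
      next
        case False
        then have UtW: "Ut \<subseteq> W" using key_dichotomy[OF inf F Wp(1)] by blast
        have sWU: "vec.subspace (W \<inter> U)" using Wp(1) sU vec.subspace_inter by blast
        obtain C where C: "vec.subspace C" "C \<subseteq> U" "(W \<inter> U) \<inter> C = {0}"
            "\<forall>v\<in>U. \<exists>a\<in>W \<inter> U. \<exists>c\<in>C. v = a + c"
          using complement_exists[OF sWU sU] by blast
        have WC: "W \<inter> C = {0}" using C(2,3) by blast
        have spV: "\<forall>v. \<exists>a\<in>W. \<exists>c\<in>C. v = a + c"
        proof
          fix v
          obtain u w where uw: "u \<in> U" "w \<in> Ut" "v = u + w" using assms(5) by blast
          obtain a c where ac: "a \<in> W \<inter> U" "c \<in> C" "u = a + c" using C(4) uw(1) by blast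
          have "a + w \<in> W" using ac(1) uw(2) UtW Wp(1) vec.subspace_add by blast
          then show "\<exists>a\<in>W. \<exists>c\<in>C. v = a + c" using ac uw by (metis add.assoc add.commute)
        qed
        interpret T: twow W C "\<lambda>a. 1" "\<lambda>a. 1 / a"
          by unfold_locales (simp_all add: Wp(1) C(1) WC spV inf)
        show ?thesis
        proof (intro exI conjI)
          show "flag_stabilizer [W] = parabolic T.mu" using T.parabolic_mu by simp
          have mv: "T.mu a *v v = T.Mf 1 (1 / a) v" for a v unfolding T.mu_def by (rule matrix_works[OF T.Mf_lin])
          show "cocharacter_of (GL_sub U Ut) T.mu"
            unfolding cocharacter_of_def cocharacter_def
          proof (intro conjI)
            show "\<forall>a. a \<noteq> 0 \<longrightarrow> invertible (T.mu a)" "\<forall>a b. a \<noteq> 0 \<longrightarrow> b \<noteq> 0 \<longrightarrow> T.mu (a * b) = T.mu a ** T.mu b"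
              using T.mu_cochar_basic by simp_all
            show "\<forall>i j. laurent_fun (\<lambda>a. T.mu a $ i $ j)"
            proof (intro allI)
            fix i j
            show "laurent_fun (\<lambda>a. T.mu a $ i $ j)"
              unfolding laurent_fun_def T.mu_entry
              by (rule exI[of _ "[:T.Q (axis j 1) $ i, T.P (axis j 1) $ i:]"], rule exI[of _ 1]) (simp add: field_simps)
            qed
            show "\<forall>a. a \<noteq> 0 \<longrightarrow> T.mu a \<in> GL_sub U Ut"
            proof (intro allI impI)
            fix a :: 'a assume a: "a \<noteq> 0"
            have PU: "T.P u \<in> U" if "u \<in> U" for u
            proof -
              have "T.P u = u - T.Q u" by (simp add: T.Q_def)
              moreover have "T.Q u \<in> U" using T.Q_in C(2) by blast
              ultimately show ?thesis using that sU vec.subspace_diff by metis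
            qed
            show "T.mu a \<in> GL_sub U Ut" unfolding GL_sub_def
            proof (intro CollectI conjI ballI)
              show "invertible (T.mu a)" using T.mu_invertible[OF a] .
              show "(\<lambda>v. T.mu a *v v) ` U = U" by (rule T.mu_U[OF sU PU a])
              fix w assume "w \<in> Ut"
              then have "w \<in> W" using UtW by blast
              then show "T.mu a *v w = w" unfolding mv T.Mf_def using T.P_W T.Q_W by simp
            qed
            qed
          qed
        qed
      qed
      then show "W \<in> {W. [W] \<in> flags_K (GL_sub U Ut)}" using isf unfolding flags_K_def by blast
    qed
  qed
qed

end
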